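(* Assume the setting in the context (in particular Assumption (A)). Let $\rho>0$, $z_0\in V_f(\rho)$ and $\epsilon>0$, and run Algorithm $\mathcal{A}_*$ from $z_0$ with accuracy $\epsilon$. Then: (i) the number of calls to $\mathcal{A}_d$ is finite, i.e. $j_{out}$ is finite; (ii) the number of iterations of $\mathcal{A}$ performed at each call of $\mathcal{A}_d$ satisfies $m_{j+1}\leq\lceil4\bar n_\rho\rceil$ for all $j\in\{0,\dots,j_{out}\}$; (iii) the total number $N_{\mathcal{A}}=\sum_{j=0}^{j_{out}}m_{j+1}$ of iterations of $\mathcal{A}$ performed by Algorithm $\mathcal{A}_*$ satisfies $$N_{\mathcal{A}}\leq\frac{e\lceil4\bar n_\rho\rceil}{2}\left\lceil5+\frac{1}{\ln15}\ln\left(1+\frac{f(z_0)-f^*}{\epsilon}\right)\right\rceil.$$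
   Context: Let $f:\mathbb{R}^n\to(-\infty,\infty]$ be a proper closed convex function such that the problem $f^*=\min_{x\in\mathbb{R}^n}f(x)$ is solvable. Let $\Omega_f=\{x: f(x)=f^*\}$, fix a norm $\|\cdot\|$ on $\mathbb{R}^n$ with dual norm $\|y\|_*=\sup\{y^Tz:\|z\|\leq 1\}$, and for $x\in\mathbb{R}^n$ let $\bar x=\arg\min_{z\in\Omega_f}\|x-z\|$. For $\rho\geq0$ let $V_f(\rho)=\{x: f(x)-f^*\leq\rho\}$. Let $\mathcal{A}$ be an iterative algorithm: for $x_0\in\mathrm{dom} f$ and integer $k\geq1$, $\mathcal{A}(x_0,k)$ denotes its $k$-th iterate started from $x_0$ (and $\mathcal{A}(x_0,0)=x_0$). Assumption (A): (i) for every $\rho>0$ there is $\mu_\rho>0$ with $f(x_0)-f^*\geq\frac{\mu_\rho}{2}\|x_0-\bar x_0\|^2$ for all $x_0\in V_f(\rho)$; (ii) there exist $a_f>0$, $L_f>0$ and $g:\mathbb{R}^n\to\mathbb{R}^n$ with $g(x)=0\iff x\in\Omega_f$ such that for every $x_0\in\mathrm{dom} f$: $f(\mathcal{A}(x_0,1))\leq f(x_0)-\frac{1}{2L_f}\|g(x_0)\|_*^2$ and $f(\mathcal{A}(x_0,k))-f^*\leq\frac{a_f}{(k+1)^2}\|x_0-\bar x_0\|^2$ for all $k\geq1$; (iii) $\bar n_\rho:=\max\{\frac12,\sqrt{2a_f/\mu_\rho}\}$. Procedure $\mathcal{A}_d(r,n)$ (input $r\in\mathrm{dom} f$, $n\in\mathbb{R}$):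 set $x_0=r$, $k=0$. Repeat: $k\gets k+1$; set $x_k=\mathcal{A}(x_0,k)$ if $f(\mathcal{A}(x_0,k))\leq f(x_{k-1})$, and $x_k=x_{k-1}$ otherwise; $\ell=\lfloor k/2\rfloor$; until $k\geq n$ and $f(x_\ell)-f(x_k)\leq\frac13(f(x_0)-f(x_\ell))$. Output $z=x_k$, $m=k$ (so $m$ iterations of $\mathcal{A}$ are performed). Algorithm $\mathcal{A}_*(z_0)$ (input $z_0\in\mathrm{dom} f$, $\epsilon>0$): set $m_0=1$, $m_{-1}=1$, $j=-1$. Repeat: $j\gets j+1$; $s_j=\sqrt{\frac{f(z_{j-1})-f(z_j)}{f(z_{j-2})-f(z_j)}}$ if $j\geq2$ and $s_j=0$ otherwise; $n_j=\max\{m_j,4s_jm_{j-1}\}$; $[z_{j+1},m_{j+1}]=\mathcal{A}_d(z_j,n_j)$; until $f(z_j)-f(z_{j+1})\leq\epsilon$. Output $z_{out}=z_{j+1}$, $j_{out}=j$. Here $e$ is Euler's number. *)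

theory Defs
  imports "HOL-Analysis.Analysis"
begin

definition proper_fun :: "('a \<Rightarrow> ereal) \<Rightarrow> bool" where
  "proper_fun f \<longleftrightarrow> (\<forall>x. f x \<noteq> -\<infinity>) \<and> (\<exists>x. f x \<noteq> \<infinity>)"

definition epigraph :: "('a \<Rightarrow> ereal) \<Rightarrow> ('a \<times> real) set" where
  "epigraph f = {(x, t). f x \<le> ereal t}"

definition convex_fun :: "('a::real_vector \<Rightarrow> ereal) \<Rightarrow> bool" where
  "convex_fun f \<longleftrightarrow> convex (epigraph f)"

definition closed_fun :: "('a::topological_space \<Rightarrow> ereal) \<Rightarrow> bool" where
  "closed_fun f \<longleftrightarrow> closed (epigraph f)"

definition effdom :: "('a \<Rightarrow> ereal) \<Rightarrow> 'a set" where
  "effdom f = {x. f x \<noteq> \<infinity>}"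

definition fmin :: "('a \<Rightarrow> ereal) \<Rightarrow> ereal" where
  "fmin f = (INF x. f x)"

definition solvable :: "('a \<Rightarrow> ereal) \<Rightarrow> bool" where
  "solvable f \<longleftrightarrow> (\<exists>x. \<forall>y. f x \<le> f y)"

definition Omega :: "('a \<Rightarrow> ereal) \<Rightarrow> 'a set" where
  "Omega f = {x. f x = fmin f}"

definition Vlev :: "('a \<Rightarrow> ereal) \<Rightarrow> real \<Rightarrow> 'a set" where
  "Vlev f \<rho> = {x. f x - fmin f \<le> ereal \<rho>}"

definition is_norm :: "('a::real_vector \<Rightarrow> real) \<Rightarrow> bool" where
  "is_norm N \<longleftrightarrow> (\<forall>x. N x = 0 \<longleftrightarrow> x = 0) \<and> (\<forall>c x. N (c *\<^sub>R x) = \<bar>c\<bar> * N x)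
     \<and> (\<forall>x y. N (x + y) \<le> N x + N y)"

definition dual_norm :: "('a::real_inner \<Rightarrow> real) \<Rightarrow> 'a \<Rightarrow> real" where
  "dual_norm N y = Sup {y \<bullet> z | z. N z \<le> 1}"

definition xbar :: "('a::real_vector \<Rightarrow> real) \<Rightarrow> ('a \<Rightarrow> ereal) \<Rightarrow> 'a \<Rightarrow> 'a" where
  "xbar N f x = (SOME z. z \<in> Omega f \<and> (\<forall>w\<in>Omega f. N (x - z) \<le> N (x - w)))"

text \<open>Assumption (A) (i)-(ii); mu is the map rho |-> mu_rho.\<close>
definition assumptionA ::
  "('a::real_inner \<Rightarrow> real) \<Rightarrow> ('a \<Rightarrow> ereal) \<Rightarrow> ('a \<Rightarrow> nat \<Rightarrow> 'a) \<Rightarrow> (real \<Rightarrow> real)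
     \<Rightarrow> real \<Rightarrow> real \<Rightarrow> ('a \<Rightarrow> 'a) \<Rightarrow> bool" where
  "assumptionA N f A mu a L g \<longleftrightarrow>
     (\<forall>\<rho>>0. mu \<rho> > 0 \<and> (\<forall>x0\<in>Vlev f \<rho>.
         f x0 - fmin f \<ge> ereal (mu \<rho> / 2 * (N (x0 - xbar N f x0))\<^sup>2)))
   \<and> a > 0 \<and> L > 0 \<and> (\<forall>x. g x = 0 \<longleftrightarrow> x \<in> Omega f)
   \<and> (\<forall>x0\<in>effdom f.
        f (A x0 1) \<le> f x0 - ereal (1 / (2 * L) * (dual_norm N (g x0))\<^sup>2)
      \<and> (\<forall>k\<ge>1. f (A x0 k) - fmin f \<le> ereal (a / (real k + 1)\<^sup>2 * (N (x0 - xbar N f x0))\<^sup>2)))"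

definition nbar :: "real \<Rightarrow> real \<Rightarrow> real" where
  "nbar a mu_rho = max (1/2) (sqrt (2 * a / mu_rho))"

fun Ad_x :: "('a \<Rightarrow> ereal) \<Rightarrow> ('a \<Rightarrow> nat \<Rightarrow> 'a) \<Rightarrow> 'a \<Rightarrow> nat \<Rightarrow> 'a" where
  "Ad_x f A r 0 = r"
| "Ad_x f A r (Suc k) =
     (if f (A r (Suc k)) \<le> f (Ad_x f A r k) then A r (Suc k) else Ad_x f A r k)"

definition Ad_stop :: "('a \<Rightarrow> ereal) \<Rightarrow> ('a \<Rightarrow> nat \<Rightarrow> 'a) \<Rightarrow> 'a \<Rightarrow> real \<Rightarrow> nat \<Rightarrow> bool" where
  "Ad_stop f A r n k \<longleftrightarrow> k \<ge> 1 \<and> real k \<ge> n \<and>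
     f (Ad_x f A r (k div 2)) - f (Ad_x f A r k) \<le> (f r - f (Ad_x f A r (k div 2))) / 3"

definition Ad_m :: "('a \<Rightarrow> ereal) \<Rightarrow> ('a \<Rightarrow> nat \<Rightarrow> 'a) \<Rightarrow> 'a \<Rightarrow> real \<Rightarrow> nat" where
  "Ad_m f A r n = (LEAST k. Ad_stop f A r n k)"

definition Ad_z :: "('a \<Rightarrow> ereal) \<Rightarrow> ('a \<Rightarrow> nat \<Rightarrow> 'a) \<Rightarrow> 'a \<Rightarrow> real \<Rightarrow> 'a" where
  "Ad_z f A r n = Ad_x f A r (Ad_m f A r n)"

definition Astar_nval :: "('a \<Rightarrow> ereal) \<Rightarrow> 'a \<Rightarrow> 'a \<Rightarrow> 'a \<Rightarrow> nat \<Rightarrow> nat \<Rightarrow> nat \<Rightarrow> real" where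
  "Astar_nval f zjm2 zjm1 zj mjm1 mj j =
     (let s = (if 2 \<le> j then sqrt (real_of_ereal (f zjm1 - f zj) / real_of_ereal (f zjm2 - f zj))
               else 0)
      in max (real mj) (4 * s * real mjm1))"

text \<open>Astar_zm f A z0 j = (z_j, m_j), with m_0 = 1 (and m_{-1} = 1).\<close>
fun Astar_zm :: "('a \<Rightarrow> ereal) \<Rightarrow> ('a \<Rightarrow> nat \<Rightarrow> 'a) \<Rightarrow> 'a \<Rightarrow> nat \<Rightarrow> 'a \<times> nat" where
  "Astar_zm f A z0 0 = (z0, 1)"
| "Astar_zm f A z0 (Suc j) =
     (let n = Astar_nval f (fst (Astar_zm f A z0 (j - 2))) (fst (Astar_zm f A z0 (j - 1)))
                (fst (Astar_zm f A z0 j))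
                (if j = 0 then 1 else snd (Astar_zm f A z0 (j - 1))) (snd (Astar_zm f A z0 j)) j
      in (Ad_z f A (fst (Astar_zm f A z0 j)) n, Ad_m f A (fst (Astar_zm f A z0 j)) n))"

abbreviation Astar_z where "Astar_z f A z0 j \<equiv> fst (Astar_zm f A z0 j)"
abbreviation Astar_m where "Astar_m f A z0 j \<equiv> snd (Astar_zm f A z0 j)"

definition Astar_n :: "('a \<Rightarrow> ereal) \<Rightarrow> ('a \<Rightarrow> nat \<Rightarrow> 'a) \<Rightarrow> 'a \<Rightarrow> nat \<Rightarrow> real" where
  "Astar_n f A z0 j = Astar_nval f (Astar_z f A z0 (j - 2)) (Astar_z f A z0 (j - 1))
      (Astar_z f A z0 j) (if j = 0 then 1 else Astar_m f A z0 (j - 1)) (Astar_m f A z0 j) j"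

definition Astar_stop :: "('a \<Rightarrow> ereal) \<Rightarrow> ('a \<Rightarrow> nat \<Rightarrow> 'a) \<Rightarrow> 'a \<Rightarrow> real \<Rightarrow> nat \<Rightarrow> bool" where
  "Astar_stop f A z0 \<epsilon> j \<longleftrightarrow> f (Astar_z f A z0 j) - f (Astar_z f A z0 (Suc j)) \<le> ereal \<epsilon>"

definition Astar_jout :: "('a \<Rightarrow> ereal) \<Rightarrow> ('a \<Rightarrow> nat \<Rightarrow> 'a) \<Rightarrow> 'a \<Rightarrow> real \<Rightarrow> nat" where
  "Astar_jout f A z0 \<epsilon> = (LEAST j. Astar_stop f A z0 \<epsilon> j)"

end

theory Submission
  imports Defs
begin

lemma ln15_ge2: "2 \<le> ln (15::real)"
proof -
  have "exp (2::real) = exp 1 * exp 1" by (simp add: exp_add[symmetric])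
  also have "\<dots> \<le> 3 * 3" using exp_le by (intro mult_mono) auto
  finally have "exp (2::real) \<le> 15" by simp
  thus ?thesis by (metis exp_le_cancel_iff exp_ln zero_less_numeral)
qed

lemma key_ineq:
  fixes x :: real
  assumes "1 \<le> x" "x < 39/10"
  shows "x^2 / (16 - x^2) \<le> 15 powr (2*x - 3)"
proof -
  have "x^2 < 4^2" using assms by (intro power_strict_mono) auto
  hence x2: "x^2 < 16" by simp
  have d: "0 < 16 - x^2" using x2 by simp
  consider "x \<le> 2" | "2 \<le> x" "x \<le> 7/2" | "7/2 \<le> x" by linarith
  then show ?thesis
  proof cases
    case 1
    have e1: "15 powr (2*x - 3) = 15 powr (2*(x-1) - 1)" by (simp add: algebra_simps)
    have e2: "15 powr (2*(x-1) - 1) = 15 powr (2*(x-1)) / 15" by (simp add: powr_diff)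
    have e3: "15 powr (2*(x-1)) = exp (2*(x-1) * ln 15)" by (simp add: powr_def)
    have e4: "exp (2*(x-1) * ln 15) \<ge> 1 + 2*(x-1)*ln 15" by (rule exp_ge_add_one_self)
    have e5: "2*(x-1)*ln 15 \<ge> 2*(x-1)*2"
      using ln15_ge2 assms(1) by (intro mult_left_mono) auto
    have e6: "2*(x-1)*2 = 4*x - 4" by simp
    have "15 powr (2*(x-1)) \<ge> 4*x-3" using e3 e4 e5 e6 by linarith
    hence r: "15 powr (2*x - 3) \<ge> (4*x-3)/15" using e1 e2 by (simp add: divide_right_mono)
    have "x^2 * 15 \<le> (4*x-3) * (16 - x^2)"
    proof -
      have "(4*x-3) * (16 - x^2) - x^2*15 = 4*(x-1)*(x+6)*(2-x)" by (simp add: algebra_simps power2_eq_square)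
      also have "\<dots> \<ge> 0" using 1 assms by simp
      finally show ?thesis by simp
    qed
    hence "x^2 / (16 - x^2) \<le> (4*x-3)/15" using d by (simp add: divide_simps)
    with r show ?thesis by linarith
  next
    case 2
    have "x^2 \<le> (7/2)^2" using 2 assms by (intro power_mono) auto
    moreover have "x^2 \<ge> 2^2" using 2 by (intro power_mono) auto
    ultimately have "x^2 / (16 - x^2) \<le> 15" using d by (simp add: divide_simps power2_eq_square)
    moreover have "15 powr (2*x-3) \<ge> 15 powr 1" using 2 by (intro powr_mono) auto
    ultimately show ?thesis by simp
  next
    case 3
    have "x^2 \<le> (39/10)^2" using 3 assms by (intro power_mono) auto
    moreover have "x^2 \<ge> (7/2)^2" using 3 by (intro power_mono) auto
    ultimately have "x^2 / (16 - x^2) \<le> 225" using d assms by (simp add: divide_simps power2_eq_square)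
    moreover have "15 powr (2*x-3) \<ge> 15 powr 2" using 3 by (intro powr_mono) auto
    ultimately show ?thesis by (simp add: powr_numeral)
  qed
qed

lemma abel1:
  fixes lam u :: "nat \<Rightarrow> real"
  assumes "\<forall>i. 0 \<le> lam i" "\<forall>i. lam i \<le> lam (Suc i)"
  shows "(\<forall>i \<le> Suc n. 0 \<le> u i \<and> u i \<le> Lg) \<Longrightarrow>
    (\<Sum>i<Suc n. lam i * (u i - u (Suc i))) + lam n * u (Suc n) \<le> lam n * Lg"
proof (induction n)
  case 0
  have "u 0 \<le> Lg" "0 \<le> lam 0" using 0 assms by auto
  hence "lam 0 * u 0 \<le> lam 0 * Lg" by (simp add: mult_left_mono)
  then show ?case by (simp add: algebra_simps)
next
  case (Suc n)
  have IH: "(\<Sum>i<Suc n. lam i * (u i - u (Suc i))) + lam n * u (Suc n) \<le> lam n * Lg"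
    using Suc by simp
  have m: "(lam (Suc n) - lam n) * u (Suc n) \<le> (lam (Suc n) - lam n) * Lg"
    using Suc.prems assms by (intro mult_left_mono) auto
  show ?case using IH m by (simp add: algebra_simps)
qed

fun lastG :: "nat set \<Rightarrow> (nat \<Rightarrow> real) \<Rightarrow> nat \<Rightarrow> real" where
  "lastG G lam 0 = 0"
| "lastG G lam (Suc n) = (if n \<in> G then lam n else lastG G lam n)"

lemma lastG_bound:
  fixes lam :: "nat \<Rightarrow> real"
  assumes "\<forall>i. 0 \<le> lam i" "\<forall>i. lam i \<le> lam (Suc i)" "\<forall>i\<in>G. t * lam i \<le> lam (i+2)" "0 \<le> t"
  shows "t * lastG G lam n \<le> lam (Suc n) \<and> 0 \<le> lastG G lam n"
proof (induction n)
  case 0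
  then show ?case using assms by simp
next
  case (Suc n)
  then show ?case using assms by (auto intro: order_trans)
qed

lemma inter_Suc: "{..<Suc n} \<inter> G = (if n \<in> G then insert n ({..<n} \<inter> G) else {..<n} \<inter> G)"
  by (auto simp: less_Suc_eq)

lemma abel2:
  fixes lam u :: "nat \<Rightarrow> real"
  assumes l0: "\<forall>i. 0 \<le> lam i" and lm: "\<forall>i. lam i \<le> lam (Suc i)"
    and lG: "\<forall>i\<in>G. 39/10 * lam i \<le> lam (i+2)"
  shows "(\<forall>i \<le> n. 0 \<le> u i \<and> u i \<le> Lg) \<Longrightarrow>
    (\<Sum>i\<in>{..<n} \<inter> G. lam i * (u (Suc i) - u i))
      + (case n of 0 \<Rightarrow> 0 | Suc k \<Rightarrow> if k \<in> G then lam k * (Lg - u n) else 0)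
    \<le> 39/29 * Lg * lastG G lam n"
proof (induction n)
  case 0
  then show ?case by simp
next
  case (Suc n)
  have Lg0: "0 \<le> Lg" using Suc.prems by force
  have un: "0 \<le> u n" "u n \<le> Lg" "0 \<le> u (Suc n)" "u (Suc n) \<le> Lg" using Suc.prems by auto
  have IH: "(\<Sum>i\<in>{..<n} \<inter> G. lam i * (u (Suc i) - u i))
      + (case n of 0 \<Rightarrow> 0 | Suc k \<Rightarrow> if k \<in> G then lam k * (Lg - u n) else 0)
    \<le> 39/29 * Lg * lastG G lam n" using Suc by simp
  let ?B = "(\<Sum>i\<in>{..<n} \<inter> G. lam i * (u (Suc i) - u i))"
  have br0: "0 \<le> (case n of 0 \<Rightarrow> 0 | Suc k \<Rightarrow> if k \<in> G then lam k * (Lg - u n) else 0)"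
    using l0 un by (cases n) auto
  show ?case
  proof (cases "n \<in> G")
    case False
    then show ?thesis using IH br0 by (simp add: inter_Suc)
  next
    case True
    have fin: "finite ({..<n} \<inter> G)" by simp
    have sumeq: "(\<Sum>i\<in>{..<Suc n} \<inter> G. lam i * (u (Suc i) - u i)) = ?B + lam n * (u (Suc n) - u n)"
      using True by (simp add: inter_Suc sum.insert[OF fin])
    have goal: "?B + lam n * (Lg - u n) \<le> 39/29 * Lg * lam n"
    proof (cases "n > 0 \<and> n - 1 \<in> G")
      case True
      then obtain k where k: "n = Suc k" "k \<in> G" by (cases n) auto
      have IH': "?B + lam k * (Lg - u n) \<le> 39/29 * Lg * lam k" using IH k by simp
      have lk: "lam k \<le> lam n" using lm k by simp
      have "(lam n - lam k) * (Lg - u n) \<le> (lam n - lam k) * Lg"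
        using lk un by (intro mult_left_mono) auto
      moreover have "(lam n - lam k) * Lg \<le> 39/29 * Lg * (lam n - lam k)"
        using lk Lg0 by (simp add: mult_right_mono)
      ultimately show ?thesis using IH' by (simp add: algebra_simps)
    next
      case False
      have lastn: "lastG G lam n * (39/10) \<le> lam n"
      proof (cases n)
        case 0 then show ?thesis using l0 by simp
      next
        case (Suc k)
        with False have "k \<notin> G" by simp
        hence "lastG G lam n = lastG G lam k" using Suc by simp
        moreover have "39/10 * lastG G lam k \<le> lam (Suc k)"
          using lastG_bound[OF l0 lm lG] by simp
        ultimately show ?thesis using Suc by simp
      qed
      have B: "?B \<le> 39/29 * Lg * lastG G lam n" using IH br0 by simp
      have "39/29 * Lg * lastG G lam n \<le> 39/29 * Lg * (lam n * (10/39))"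
        using lastn Lg0 by (intro mult_left_mono) auto
      moreover have "lam n * (Lg - u n) \<le> lam n * Lg" using l0 un by (simp add: mult_left_mono)
      ultimately show ?thesis using B by (simp add: algebra_simps)
    qed
    show ?thesis using goal True sumeq by (simp add: algebra_simps)
  qed
qed


lemma telesc2:
  fixes mm :: "nat \<Rightarrow> real"
  shows "(\<Sum>i<n. mm (i+3) - mm (i+1)) = mm (n+2) + mm (n+1) - mm 2 - mm 1"
  by (induction n) (auto simp: algebra_simps numeral_3_eq_3 numeral_2_eq_2)

lemma step_ineq:
  fixes a b D0 D1 u0 u1 :: real
  assumes a1: "1 \<le> a" and ab: "a \<le> b" and D0: "0 < D0" and D1: "0 < D1"
    and c: "4 * a * sqrt (D1 / (D0 + D1)) \<le> b"
    and ud: "u1 - u0 = ln (D1 / D0) / ln 15"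
    and nG: "b < 39/10 * a"
  shows "a * (u1 - u0) \<le> 2 * b - 3 * a"
proof -
  define x where "x = b / a"
  have a0: "0 < a" using a1 by simp
  have x1: "1 \<le> x" using ab a0 by (simp add: x_def)
  have x39: "x < 39/10" using nG a0 by (simp add: x_def divide_simps)
  have bx: "b = a * x" using a0 by (simp add: x_def)
  have "sqrt (D1 / (D0 + D1)) \<le> x / 4" using c a0 bx by (simp add: field_simps)
  hence "(sqrt (D1 / (D0 + D1)))^2 \<le> (x/4)^2"
    using D0 D1 by (intro power_mono) auto
  hence w: "D1 / (D0 + D1) \<le> x^2 / 16" using D0 D1 by (simp add: power_divide)
  have "D1 * 16 \<le> x^2 * (D0 + D1)" using w D0 D1 by (simp add: divide_simps)
  hence "D1 * (16 - x^2) \<le> x^2 * D0" by (simp add: algebra_simps)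
  moreover have "x^2 < 16"
  proof -
    have "x^2 < 4^2" using x1 x39 by (intro power_strict_mono) auto
    thus ?thesis by simp
  qed
  ultimately have r: "D1 / D0 \<le> x^2 / (16 - x^2)" using D0 by (simp add: divide_simps mult.commute)
  have "D1 / D0 \<le> 15 powr (2*x - 3)" using r key_ineq[OF x1 x39] by linarith
  moreover have "0 < D1 / D0" using D0 D1 by simp
  ultimately have "ln (D1 / D0) \<le> ln (15 powr (2*x - 3))" by (subst ln_le_cancel_iff) auto
  also have "\<dots> = (2*x - 3) * ln 15" by (simp add: ln_powr)
  finally have l1: "ln (D1 / D0) \<le> (2*x - 3) * ln 15" .
  have l2: "(u1 - u0) * ln 15 = ln (D1 / D0)" using ud by simp
  have "u1 - u0 \<le> 2*x - 3"
    using mult_right_le_imp_le[of "u1-u0" "ln 15" "2*x-3"] l1 l2 by simp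
  hence "a * (u1 - u0) \<le> a * (2*x - 3)" using a0 by (simp add: mult_left_mono)
  thus ?thesis using bx by (simp add: algebra_simps)
qed

lemma comb:
  fixes mm D :: "nat \<Rightarrow> real" and M eps H :: real and n :: nat
  assumes mono: "\<forall>i. mm i \<le> mm (Suc i)" and pos: "\<forall>i. 1 \<le> mm i" and bnd: "\<forall>i. mm i \<le> M"
    and eps: "0 < eps" and Dgt: "\<forall>i \<le> n. eps < D i" and Dle: "\<forall>i \<le> n. D i \<le> H"
    and cons: "\<forall>i < n. 4 * mm (i+1) * sqrt (D (i+1) / (D i + D (i+1))) \<le> mm (i+3)"
  shows "(\<Sum>i<n. mm (i+3)) \<le> (1 + 10/29) * M * (ln (H/eps) / ln 15) + 3 * (mm (n+1) + mm (n+2) - mm 1 - mm 2)"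
proof -
  define Lg where "Lg = ln (H/eps) / ln 15"
  define u where "u i = ln (D i / eps) / ln 15" for i
  define lam where "lam i = mm (i+1)" for i
  define G where "G = {i. 39/10 * lam i \<le> lam (i+2)}"
  have ln15: "0 < ln (15::real)" by simp
  have Dp: "\<forall>i\<le>n. 0 < D i" using Dgt eps by force
  have uu: "\<forall>i\<le>n. 0 \<le> u i \<and> u i \<le> Lg"
  proof (intro allI impI conjI)
    fix i assume i: "i \<le> n"
    have "1 < D i / eps" using Dgt i eps by simp
    hence "0 \<le> ln (D i / eps)" by simp
    thus "0 \<le> u i" unfolding u_def using ln15 by simp
    have "D i / eps \<le> H / eps" using Dle i eps by (simp add: divide_right_mono)
    moreover have "0 < D i / eps" using Dp i eps by simp
    ultimately have "ln (D i / eps) \<le> ln (H / eps)" by simp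
    thus "u i \<le> Lg" unfolding u_def Lg_def using ln15 by (simp add: divide_right_mono)
  qed
  have Lg0: "0 \<le> Lg" using uu by force
  have l0: "\<forall>i. 0 \<le> lam i" using pos unfolding lam_def by (metis order_trans zero_le_one)
  have lm: "\<forall>i. lam i \<le> lam (Suc i)" using mono unfolding lam_def by simp
  have lG: "\<forall>i\<in>G. 39/10 * lam i \<le> lam (i+2)" unfolding G_def by simp
  have step: "mm (i+3) \<le> lam i * (u i - u (Suc i)) + 3 * (mm (i+3) - mm (i+1))
      + (if i \<in> G then lam i * (u (Suc i) - u i) else 0)" if i: "i < n" for i
  proof (cases "i \<in> G")
    case True
    hence "39/10 * mm (i+1) \<le> mm (i+3)" unfolding G_def lam_def by (simp add: numeral_3_eq_3)
    moreover have "1 \<le> mm (i+1)" using pos by simp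
    ultimately show ?thesis using True by (simp add: algebra_simps)
  next
    case False
    hence nG: "mm (i+3) < 39/10 * mm (i+1)" unfolding G_def lam_def by (simp add: numeral_3_eq_3)
    have ab: "mm (i+1) \<le> mm (i+3)" using mono[rule_format, of "i+1"] mono[rule_format, of "i+2"]
      by (simp add: numeral_3_eq_3)
    have D0: "0 < D i" "0 < D (i+1)" using Dp i by auto
    have ud: "u (Suc i) - u i = ln (D (i+1) / D i) / ln 15"
      unfolding u_def using D0 eps by (simp add: ln_div diff_divide_distrib)
    have "lam i * (u (Suc i) - u i) \<le> 2 * mm (i+3) - 3 * mm (i+1)"
      unfolding lam_def
      using step_ineq[OF _ ab D0(1) D0(2) _ ud nG] pos cons i by simp
    thus ?thesis using False by (simp add: algebra_simps lam_def)
  qed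
  have S1: "(\<Sum>i<n. mm (i+3)) \<le> (\<Sum>i<n. lam i * (u i - u (Suc i))) + 3 * (\<Sum>i<n. mm (i+3) - mm (i+1))
      + (\<Sum>i<n. (if i \<in> G then lam i * (u (Suc i) - u i) else 0))"
    using sum_mono[of "{..<n}", OF step] by (simp add: sum.distrib sum_distrib_left)
  have S2: "(\<Sum>i<n. (if i \<in> G then lam i * (u (Suc i) - u i) else 0)) = (\<Sum>i\<in>{..<n} \<inter> G. lam i * (u (Suc i) - u i))"
    by (simp add: sum.inter_restrict)
  have A1: "(\<Sum>i<n. lam i * (u i - u (Suc i))) \<le> M * Lg"
  proof (cases n)
    case 0
    have "0 \<le> M" using bnd[rule_format, of 0] pos[rule_format, of 0] by simp
    then show ?thesis using Lg0 0 by simp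
  next
    case (Suc k)
    have "(\<Sum>i<Suc k. lam i * (u i - u (Suc i))) + lam k * u (Suc k) \<le> lam k * Lg"
      using abel1[OF l0 lm, where n=k and u=u and Lg=Lg] uu Suc by simp
    moreover have "0 \<le> lam k * u (Suc k)" using l0 uu Suc by simp
    moreover have "lam k * Lg \<le> M * Lg" using bnd Lg0 unfolding lam_def by (simp add: mult_right_mono)
    ultimately show ?thesis using Suc by simp
  qed
  have A2: "(\<Sum>i\<in>{..<n} \<inter> G. lam i * (u (Suc i) - u i)) \<le> 10/29 * M * Lg"
  proof -
    have "(\<Sum>i\<in>{..<n} \<inter> G. lam i * (u (Suc i) - u i))
      + (case n of 0 \<Rightarrow> 0 | Suc k \<Rightarrow> if k \<in> G then lam k * (Lg - u n) else 0)
      \<le> 39/29 * Lg * lastG G lam n" using abel2[OF l0 lm lG, where n=n and u=u and Lg=Lg] uu by simp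
    moreover have "0 \<le> (case n of 0 \<Rightarrow> 0 | Suc k \<Rightarrow> if k \<in> G then lam k * (Lg - u n) else 0)"
      using l0 uu by (cases n) auto
    moreover have "39/10 * lastG G lam n \<le> lam (Suc n)" using lastG_bound[OF l0 lm lG] by simp
    hence "39/29 * Lg * lastG G lam n \<le> 39/29 * Lg * (M * (10/39))"
      using bnd Lg0 unfolding lam_def by (intro mult_left_mono) (auto simp: field_simps intro: order_trans)
    ultimately show ?thesis by (simp add: algebra_simps)
  qed
  show ?thesis using S1 S2 A1 A2 telesc2[of mm n] unfolding Lg_def[symmetric] by (simp add: algebra_simps)
qed


lemma ratio_le:
  fixes a b c q :: real
  assumes "0 \<le> c" "c \<le> b" "b \<le> a" "b \<le> q * a" "0 \<le> q"
  shows "(b - c) / (a - c) \<le> q"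
proof (cases "a = c")
  case True then show ?thesis using assms by simp
next
  case False
  hence ac: "0 < a - c" using assms by simp
  have a0: "0 < a" using ac assms by simp
  have "b * c \<le> a * c" using assms by (intro mult_right_mono) auto
  hence "(b - c) * a \<le> b * (a - c)" by (simp add: algebra_simps)
  also have "\<dots> \<le> (q * a) * (a - c)" using assms ac by (intro mult_right_mono) auto
  finally have "(b - c) * a \<le> (q * (a - c)) * a" by (simp add: algebra_simps)
  hence "b - c \<le> q * (a - c)" using a0 by (simp add: mult_le_cancel_right_pos)
  thus ?thesis using ac by (simp add: divide_simps)
qed

locale S =
  fixes f :: "'a::real_inner \<Rightarrow> ereal" and N :: "'a \<Rightarrow> real"
    and A :: "'a \<Rightarrow> nat \<Rightarrow> 'a" and mu :: "real \<Rightarrow> real"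
    and a L :: real and g :: "'a \<Rightarrow> 'a"
    and \<rho> :: real and z0 :: "'a"
  assumes proper: "proper_fun f" and solv: "solvable f"
    and AA: "assumptionA N f A mu a L g"
    and rho: "\<rho> > 0" and z0V: "z0 \<in> Vlev f \<rho>"
begin

definition "fs = real_of_ereal (fmin f)"
definition "F y = real_of_ereal (f y)" for y
definition "nb = nbar a (mu \<rho>)"

lemma fmin_eq: "fmin f = ereal fs"
proof -
  obtain xs where xs: "\<forall>y. f xs \<le> f y" using solv unfolding solvable_def by blast
  have "fmin f = f xs" unfolding fmin_def
    by (rule antisym) (auto intro: INF_lower INF_greatest xs[rule_format])
  moreover obtain x1 where "f x1 \<noteq> \<infinity>" using proper unfolding proper_fun_def by blast
  hence "f xs \<noteq> \<infinity>" using xs[rule_format, of x1] by auto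
  moreover have "f xs \<noteq> -\<infinity>" using proper unfolding proper_fun_def by blast
  ultimately show ?thesis unfolding fs_def by (cases "f xs") auto
qed

lemma fmin_le: "ereal fs \<le> f y"
  unfolding fmin_eq[symmetric] fmin_def by (rule INF_lower) simp

lemma finite_eq: "f y \<noteq> \<infinity> \<Longrightarrow> f y = ereal (F y)"
  using proper unfolding proper_fun_def F_def by (cases "f y") auto

lemma F_ge: "f y \<noteq> \<infinity> \<Longrightarrow> fs \<le> F y"
  using fmin_le[of y] finite_eq[of y] by simp

lemma Vlev_iff: "y \<in> Vlev f \<rho> \<longleftrightarrow> f y \<noteq> \<infinity> \<and> F y - fs \<le> \<rho>"
proof
  assume y: "y \<in> Vlev f \<rho>"
  hence *: "f y - ereal fs \<le> ereal \<rho>" unfolding Vlev_def fmin_eq by simp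
  have "f y \<noteq> \<infinity>" using * by auto
  thus "f y \<noteq> \<infinity> \<and> F y - fs \<le> \<rho>" using * finite_eq[of y] by simp
next
  assume "f y \<noteq> \<infinity> \<and> F y - fs \<le> \<rho>"
  thus "y \<in> Vlev f \<rho>" unfolding Vlev_def fmin_eq using finite_eq[of y] by simp
qed

lemma mu_pos: "0 < mu \<rho>" using AA rho unfolding assumptionA_def by blast
lemma a_pos: "0 < a" using AA unfolding assumptionA_def by blast

lemma nb_ge: "1/2 \<le> nb" "2 * a / mu \<rho> \<le> nb^2"
proof -
  show "1/2 \<le> nb" unfolding nb_def nbar_def by simp
  have "sqrt (2 * a / mu \<rho>) \<le> nb" unfolding nb_def nbar_def by simp
  moreover have "0 \<le> 2 * a / mu \<rho>" using a_pos mu_pos by simp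
  ultimately have "(sqrt (2 * a / mu \<rho>))^2 \<le> nb^2" by (intro power_mono) auto
  thus "2 * a / mu \<rho> \<le> nb^2" using \<open>0 \<le> 2 * a / mu \<rho>\<close> by simp
qed

lemma rateV:
  assumes x0: "x0 \<in> Vlev f \<rho>" and k: "1 \<le> k"
  shows "f (A x0 k) \<noteq> \<infinity> \<and> F (A x0 k) - fs \<le> nb^2 / (real k + 1)^2 * (F x0 - fs)"
proof -
  define Nd where "Nd = N (x0 - xbar N f x0)"
  have fx0: "f x0 \<noteq> \<infinity>" "F x0 - fs \<le> \<rho>" using x0 Vlev_iff by auto
  have eff: "x0 \<in> effdom f" using fx0 unfolding effdom_def by simp
  have qg: "f x0 - fmin f \<ge> ereal (mu \<rho> / 2 * Nd^2)"
    using AA rho x0 unfolding assumptionA_def Nd_def by blast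
  have rt: "f (A x0 k) - fmin f \<le> ereal (a / (real k + 1)^2 * Nd^2)"
    using AA eff k unfolding assumptionA_def Nd_def by blast
  have fin: "f (A x0 k) \<noteq> \<infinity>" using rt unfolding fmin_eq by auto
  have qg': "mu \<rho> / 2 * Nd^2 \<le> F x0 - fs" using qg finite_eq[OF fx0(1)] unfolding fmin_eq by simp
  have rt': "F (A x0 k) - fs \<le> a / (real k + 1)^2 * Nd^2" using rt finite_eq[OF fin] unfolding fmin_eq by simp
  have Nd2: "Nd^2 \<le> 2 / mu \<rho> * (F x0 - fs)" using qg' mu_pos by (simp add: field_simps)
  have "a / (real k + 1)^2 * Nd^2 \<le> a / (real k + 1)^2 * (2 / mu \<rho> * (F x0 - fs))"
    using Nd2 a_pos by (intro mult_left_mono) auto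
  also have "\<dots> = (2 * a / mu \<rho>) / (real k + 1)^2 * (F x0 - fs)" by (simp add: field_simps)
  also have "\<dots> \<le> nb^2 / (real k + 1)^2 * (F x0 - fs)"
    using nb_ge(2) F_ge[OF fx0(1)] by (intro mult_right_mono divide_right_mono) auto
  finally show ?thesis using rt' fin by simp
qed

lemma Adx_Suc_le: "f (Ad_x f A r (Suc k)) \<le> f (Ad_x f A r k)"
  by auto

lemma Adx_le_A: "1 \<le> k \<Longrightarrow> f (Ad_x f A r k) \<le> f (A r k)"
  by (cases k) auto

lemma Adx_mono: "j \<le> k \<Longrightarrow> f (Ad_x f A r k) \<le> f (Ad_x f A r j)"
proof (induction k)
  case 0 then show ?case by simp
next
  case (Suc k)
  then show ?case
    by (cases "j = Suc k") (auto intro: order_trans[OF Adx_Suc_le])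
qed

lemma Adx_le_r: "f (Ad_x f A r k) \<le> f r"
  using Adx_mono[of 0 k r] by simp

lemma Adx_V: "r \<in> Vlev f \<rho> \<Longrightarrow> Ad_x f A r k \<in> Vlev f \<rho>"
  using Adx_le_r[of r k] unfolding Vlev_def by (auto intro: order_trans ereal_minus_mono)


lemma stop_at:
  assumes r: "r \<in> Vlev f \<rho>" and K2: "2 \<le> K" and Kn: "n \<le> real K" and K4: "4 * nb \<le> real K"
  shows "Ad_stop f A r n K"
proof -
  define l where "l = K div 2"
  have l1: "1 \<le> l" using K2 unfolding l_def by simp
  have "K \<le> 2 * l + 1" unfolding l_def by simp
  hence "real K \<le> 2 * real l + 1" by linarith
  hence l2: "2 * nb \<le> real l + 1" using K4 by simp
  define xl where "xl = Ad_x f A r l"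
  define xK where "xK = Ad_x f A r K"
  have Vs: "xl \<in> Vlev f \<rho>" "xK \<in> Vlev f \<rho>" unfolding xl_def xK_def using Adx_V[OF r] by auto
  have fin: "f r \<noteq> \<infinity>" "f xl \<noteq> \<infinity>" "f xK \<noteq> \<infinity>" using Vs r Vlev_iff by auto
  have rA: "f (A r l) \<noteq> \<infinity> \<and> F (A r l) - fs \<le> nb^2 / (real l + 1)^2 * (F r - fs)"
    using rateV[OF r l1] .
  have "f xl \<le> f (A r l)" unfolding xl_def using Adx_le_A[OF l1] .
  hence p1: "F xl \<le> F (A r l)" using finite_eq[OF fin(2)] finite_eq[of "A r l"] rA by simp
  have nbpos: "0 < nb" using nb_ge(1) by simp
  have "(2 * nb)^2 \<le> (real l + 1)^2" using l2 nbpos by (intro power_mono) auto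
  hence q: "nb^2 / (real l + 1)^2 \<le> 1/4" by (simp add: divide_simps power_mult_distrib)
  have h0: "0 \<le> F r - fs" using F_ge[OF fin(1)] by simp
  have "nb^2 / (real l + 1)^2 * (F r - fs) \<le> 1/4 * (F r - fs)" using q h0 by (intro mult_right_mono) auto
  moreover have rA2: "F (A r l) - fs \<le> nb^2 / (real l + 1)^2 * (F r - fs)" using rA by simp
  ultimately have p: "F xl - fs \<le> (F r - fs) / 4" using p1 by linarith
  have qK: "fs \<le> F xK" using F_ge[OF fin(3)] .
  have "F xl - F xK \<le> (F r - F xl) / 3" using p qK by simp
  hence "f xl - f xK \<le> (f r - f xl) / 3"
    using finite_eq[OF fin(1)] finite_eq[OF fin(2)] finite_eq[OF fin(3)] by simp
  thus ?thesis unfolding Ad_stop_def xl_def xK_def l_def using K2 Kn by simp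
qed

declare Astar_zm.simps(2)[simp del]

abbreviation "zz j \<equiv> Astar_z f A z0 j"
abbreviation "mm j \<equiv> Astar_m f A z0 j"
abbreviation "nn j \<equiv> Astar_n f A z0 j"

lemma zm_Suc: "Astar_zm f A z0 (Suc j) = (Ad_z f A (zz j) (nn j), Ad_m f A (zz j) (nn j))"
  unfolding Astar_zm.simps(2) Astar_n_def Let_def by (rule refl)

lemma m_Suc: "mm (Suc j) = Ad_m f A (zz j) (nn j)"
  by (simp only: zm_Suc snd_conv)

lemma z_Suc: "zz (Suc j) = Ad_x f A (zz j) (mm (Suc j))"
  by (simp only: zm_Suc fst_conv snd_conv Ad_z_def)

lemma m0: "mm 0 = 1" by simp
lemma z0': "zz 0 = z0" by simp

lemma zV: "zz j \<in> Vlev f \<rho>"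
proof (induction j)
  case 0 then show ?case using z0V by simp
next
  case (Suc j) then show ?case using Adx_V z_Suc by simp
qed

lemma zfin: "f (zz j) \<noteq> \<infinity>" using zV Vlev_iff by auto

definition "Kst j = max (nat \<lceil>nn j\<rceil>) (nat \<lceil>4 * nb\<rceil>)"

lemma stopK: "Ad_stop f A (zz j) (nn j) (Kst j)"
proof (rule stop_at[OF zV])
  have "2 \<le> 4 * nb" using nb_ge(1) by simp
  hence "2 \<le> nat \<lceil>4 * nb\<rceil>" by linarith
  thus "2 \<le> Kst j" unfolding Kst_def by simp
  show "nn j \<le> real (Kst j)" unfolding Kst_def by linarith
  show "4 * nb \<le> real (Kst j)" unfolding Kst_def by linarith
qed

lemma m_stop: "Ad_stop f A (zz j) (nn j) (mm (Suc j))"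
  unfolding m_Suc Ad_m_def by (rule LeastI[where P="\<lambda>k. Ad_stop f A (zz j) (nn j) k"]) (rule stopK)

lemma m_le_K: "mm (Suc j) \<le> Kst j"
  unfolding m_Suc Ad_m_def by (rule Least_le[where P="\<lambda>k. Ad_stop f A (zz j) (nn j) k"]) (rule stopK)

lemma m_ge: "1 \<le> mm (Suc j)" "nn j \<le> real (mm (Suc j))"
  using m_stop[of j] unfolding Ad_stop_def by auto

lemma dec: "F (zz (Suc j)) - fs \<le> nb^2 / (real (mm (Suc j)) + 1)^2 * (F (zz j) - fs)"
proof -
  have r: "f (A (zz j) (mm (Suc j))) \<noteq> \<infinity> \<and>
      F (A (zz j) (mm (Suc j))) - fs \<le> nb^2 / (real (mm (Suc j)) + 1)^2 * (F (zz j) - fs)"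
    using rateV[OF zV m_ge(1)] .
  have "f (zz (Suc j)) \<le> f (A (zz j) (mm (Suc j)))" unfolding z_Suc using Adx_le_A[OF m_ge(1)] .
  hence "F (zz (Suc j)) \<le> F (A (zz j) (mm (Suc j)))"
    using finite_eq[OF zfin[of "Suc j"]] finite_eq[of "A (zz j) (mm (Suc j))"] r by simp
  thus ?thesis using r by simp
qed

lemma nn_eq: "nn j = max (real (mm j)) (4 * (if 2 \<le> j then sqrt (real_of_ereal (f (zz (j-1)) - f (zz j)) / real_of_ereal (f (zz (j-2)) - f (zz j))) else 0) * real (if j = 0 then 1 else mm (j-1)))"
  by (simp add: Astar_n_def Astar_nval_def Let_def)


lemma zdec: "f (zz (Suc j)) \<le> f (zz j)"
  unfolding z_Suc by (rule Adx_le_r)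

lemma Fdec: "F (zz (Suc j)) \<le> F (zz j)"
  using zdec[of j] finite_eq[OF zfin[of j]] finite_eq[OF zfin[of "Suc j"]] by simp

lemma Fle0: "F (zz j) \<le> F z0"
proof (induction j)
  case 0 then show ?case by simp
next
  case (Suc j) then show ?case using Fdec[of j] by simp
qed

lemma Fdiff: "real_of_ereal (f (zz i) - f (zz j)) = F (zz i) - F (zz j)"
  using finite_eq[OF zfin[of i]] finite_eq[OF zfin[of j]] by (simp del: Astar_zm.simps)

lemma s_bound:
  "4 * sqrt (real_of_ereal (f (zz (Suc i)) - f (zz (Suc (Suc i)))) / real_of_ereal (f (zz i) - f (zz (Suc (Suc i))))) * real (mm (Suc i)) \<le> 4 * nb"
proof -
  define a' where "a' = F (zz i) - fs"
  define b' where "b' = F (zz (Suc i)) - fs"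
  define c' where "c' = F (zz (Suc (Suc i))) - fs"
  define m where "m = real (mm (Suc i))"
  define q where "q = nb^2 / (m + 1)^2"
  have m1: "1 \<le> m" unfolding m_def using m_ge(1)[of i] by simp
  have nbpos: "0 < nb" using nb_ge(1) by simp
  have c0: "0 \<le> c'" unfolding c'_def using F_ge[OF zfin] by simp
  have cb: "c' \<le> b'" unfolding c'_def b'_def using Fdec by simp
  have ba: "b' \<le> a'" unfolding a'_def b'_def using Fdec by simp
  have bq: "b' \<le> q * a'" unfolding q_def b'_def a'_def m_def using dec[of i] by simp
  have ratio: "real_of_ereal (f (zz (Suc i)) - f (zz (Suc (Suc i)))) / real_of_ereal (f (zz i) - f (zz (Suc (Suc i)))) = (b' - c') / (a' - c')"
    unfolding Fdiff a'_def b'_def c'_def by simp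
  have "(b' - c') / (a' - c') \<le> q" using ratio_le[OF c0 cb ba bq] q_def by simp
  hence "sqrt ((b' - c') / (a' - c')) \<le> sqrt q" by simp
  also have "sqrt q = nb / (m + 1)" unfolding q_def using nbpos m1 by (simp add: real_sqrt_divide)
  finally have sq: "sqrt ((b' - c') / (a' - c')) \<le> nb / (m + 1)" .
  have "4 * sqrt ((b' - c') / (a' - c')) * m \<le> 4 * (nb / (m + 1)) * m"
    using sq m1 by (intro mult_right_mono) auto
  also have "\<dots> \<le> 4 * nb" using nbpos m1 by (simp add: divide_simps)
  finally show ?thesis unfolding ratio m_def .
qed

lemma nn_le: "nn j \<le> max (real (mm j)) (4 * nb)"
proof -
  have nb0: "0 \<le> nb" using nb_ge(1) by simp
  consider "j = 0" | "j = 1" | i where "j = Suc (Suc i)" by (metis One_nat_def not0_implies_Suc)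
  then show ?thesis
  proof cases
    case 1 then show ?thesis using nb0 by (simp add: nn_eq)
  next
    case 2 then show ?thesis using nb0 by (simp add: nn_eq)
  next
    case 3
    then show ?thesis using s_bound[of i] by (simp add: nn_eq)
  qed
qed

lemma nn_ge: "real (mm j) \<le> nn j"
  by (simp add: nn_eq)

lemma mm_props: "1 \<le> mm j \<and> real (mm j) \<le> real_of_int \<lceil>4 * nb\<rceil>"
proof (induction j)
  case 0
  have "2 \<le> 4 * nb" using nb_ge(1) by simp
  then show ?case by simp
next
  case (Suc j)
  have "nn j \<le> real_of_int \<lceil>4 * nb\<rceil>" using nn_le[of j] Suc by linarith
  hence "\<lceil>nn j\<rceil> \<le> \<lceil>4 * nb\<rceil>" by (simp add: ceiling_le)
  hence "Kst j = nat \<lceil>4 * nb\<rceil>" unfolding Kst_def by simp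
  hence "mm (Suc j) \<le> nat \<lceil>4 * nb\<rceil>" using m_le_K[of j] by simp
  hence r1: "real (mm (Suc j)) \<le> real (nat \<lceil>4 * nb\<rceil>)" by (simp only: of_nat_le_iff)
  have "0 \<le> \<lceil>4 * nb\<rceil>" using nb_ge(1) by simp
  hence "real (nat \<lceil>4 * nb\<rceil>) = real_of_int \<lceil>4 * nb\<rceil>" by (rule of_nat_nat)
  hence "real (mm (Suc j)) \<le> real_of_int \<lceil>4 * nb\<rceil>" using r1 by linarith
  then show ?case using m_ge(1)[of j] by simp
qed

lemma mm_mono: "mm j \<le> mm (Suc j)"
  using nn_ge[of j] m_ge(2)[of j] by simp

lemma stop_iff: "Astar_stop f A z0 e j \<longleftrightarrow> F (zz j) - F (zz (Suc j)) \<le> e"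
  unfolding Astar_stop_def using finite_eq[OF zfin[of j]] finite_eq[OF zfin[of "Suc j"]] by simp

lemma terminates:
  assumes e: "0 < e"
  shows "\<exists>j. Astar_stop f A z0 e j"
proof (rule ccontr)
  assume "\<not> ?thesis"
  hence d: "\<forall>j. e < F (zz j) - F (zz (Suc j))" using stop_iff by (auto simp: not_le)
  have le: "F (zz j) \<le> F z0 - real j * e" for j
  proof (induction j)
    case 0 then show ?case by simp
  next
    case (Suc j) then show ?case using d[rule_format, of j] by (simp add: algebra_simps)
  qed
  obtain j :: nat where j: "(F z0 - fs) / e < real j" using reals_Archimedean2 by blast
  have "F z0 - fs < real j * e" using j e by (simp add: divide_simps)
  moreover have "fs \<le> F (zz j)" using F_ge[OF zfin] .
  ultimately show False using le[of j] by simp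
qed


lemma sum_shift: "(\<Sum>j\<le>Suc n. (h::nat \<Rightarrow> real) (Suc j)) = h 1 + h 2 + (\<Sum>i<n. h (i+3))"
  by (induction n) (simp_all add: numeral_2_eq_2 numeral_3_eq_3)

lemma main:
  assumes eps: "0 < \<epsilon>"
  shows "(\<exists>j. Astar_stop f A z0 \<epsilon> j)
    \<and> (\<forall>j \<le> Astar_jout f A z0 \<epsilon>.
          (\<exists>k. Ad_stop f A (zz j) (nn j) k)
        \<and> real (mm (Suc j)) \<le> real_of_int \<lceil>4 * nbar a (mu \<rho>)\<rceil>)
    \<and> (\<Sum>j\<le>Astar_jout f A z0 \<epsilon>. real (mm (Suc j)))
        \<le> exp 1 * real_of_int \<lceil>4 * nbar a (mu \<rho>)\<rceil> / 2 *
          real_of_int \<lceil>5 + 1 / ln 15 * ln (1 + real_of_ereal (f z0 - fmin f) / \<epsilon>)\<rceil>"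
proof -
  have ex: "\<exists>j. Astar_stop f A z0 \<epsilon> j" using terminates[OF eps] .
  define T where "T = Astar_jout f A z0 \<epsilon>"
  define M' where "M' = real_of_int \<lceil>4 * nb\<rceil>"
  define mr where "mr i = real (mm i)" for i
  define Dv where "Dv i = F (zz i) - F (zz (Suc i))" for i
  define H where "H = F z0 - fs"
  have stT: "\<forall>i<T. \<epsilon> < Dv i"
  proof (intro allI impI)
    fix i assume "i < T"
    hence "\<not> Astar_stop f A z0 \<epsilon> i" unfolding T_def Astar_jout_def by (rule not_less_Least)
    thus "\<epsilon> < Dv i" unfolding Dv_def stop_iff by simp
  qed
  have part2: "\<forall>j \<le> T. (\<exists>k. Ad_stop f A (zz j) (nn j) k) \<and> real (mm (Suc j)) \<le> M'"
    using stopK mm_props unfolding M'_def by blast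
  have Hr: "real_of_ereal (f z0 - fmin f) = H"
    unfolding H_def fmin_eq using finite_eq[OF zfin[of 0]] by simp
  have H0: "0 \<le> H" unfolding H_def using F_ge[OF zfin[of 0]] by simp
  define L' where "L' = ln (1 + H / \<epsilon>) / ln 15"
  have L'0: "0 \<le> L'" unfolding L'_def using H0 eps by simp
  define C where "C = real_of_int \<lceil>5 + 1 / ln 15 * ln (1 + H / \<epsilon>)\<rceil>"
  have C5': "5 + 1 / ln 15 * ln (1 + H / \<epsilon>) \<le> C" unfolding C_def by (rule le_of_int_ceiling)
  have C5: "5 + L' \<le> C" using C5' unfolding L'_def by simp
  have mr1: "\<forall>i. 1 \<le> mr i" unfolding mr_def using mm_props by simp
  have mrM: "\<forall>i. mr i \<le> M'" unfolding mr_def M'_def using mm_props by blast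
  have mrmono: "\<forall>i. mr i \<le> mr (Suc i)" unfolding mr_def using mm_mono by simp
  have M'0: "0 \<le> M'" using mr1 mrM by (meson order_trans zero_le_one)
  have e: "78/29 \<le> exp (1::real)"
    using e_approx_32 by (simp add: abs_if split: if_split_asm)
  have key: "(\<Sum>j\<le>T. mr (Suc j)) \<le> 6 * M' + 39/29 * M' * L'"
  proof (cases T)
    case 0
    have "0 \<le> 39/29 * M' * L'" using M'0 L'0 by simp
    moreover have "mr 1 \<le> M'" using mrM by simp
    moreover have "(\<Sum>j\<le>T. mr (Suc j)) = mr 1" using 0 by simp
    ultimately show ?thesis using M'0 by linarith
  next
    case (Suc n)
    have Dgt: "\<forall>i \<le> n. \<epsilon> < Dv i" using stT Suc by auto
    have Dle: "\<forall>i \<le> n. Dv i \<le> H"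
    proof (intro allI impI)
      fix i
      show "Dv i \<le> H" unfolding Dv_def H_def using Fle0[of i] F_ge[OF zfin[of "Suc i"]] by simp
    qed
    have cons: "\<forall>i < n. 4 * mr (i+1) * sqrt (Dv (i+1) / (Dv i + Dv (i+1))) \<le> mr (i+3)"
    proof (intro allI impI)
      fix i
      have q: "Dv (Suc i) / (Dv i + Dv (Suc i)) = real_of_ereal (f (zz (Suc i)) - f (zz (Suc (Suc i)))) / real_of_ereal (f (zz i) - f (zz (Suc (Suc i))))"
        unfolding Fdiff Dv_def by simp
      have "4 * sqrt (real_of_ereal (f (zz (Suc i)) - f (zz (Suc (Suc i)))) / real_of_ereal (f (zz i) - f (zz (Suc (Suc i))))) * real (mm (Suc i)) \<le> nn (Suc (Suc i))"
        by (simp add: nn_eq)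
      also have "\<dots> \<le> real (mm (Suc (Suc (Suc i))))" by (rule m_ge(2))
      finally show "4 * mr (i+1) * sqrt (Dv (i+1) / (Dv i + Dv (i+1))) \<le> mr (i+3)"
        unfolding mr_def using q by (simp add: numeral_3_eq_3 algebra_simps)
    qed
    define Lg where "Lg = ln (H / \<epsilon>) / ln 15"
    have cb: "(\<Sum>i<n. mr (i+3)) \<le> (1 + 10/29) * M' * Lg + 3 * (mr (n+1) + mr (n+2) - mr 1 - mr 2)"
      using comb[OF mrmono mr1 mrM eps Dgt Dle cons] unfolding Lg_def .
    have Hpos: "0 < H / \<epsilon>" using Dgt Dle eps by force
    have "ln (H / \<epsilon>) \<le> ln (1 + H / \<epsilon>)" using Hpos by simp
    hence LgL: "Lg \<le> L'" unfolding Lg_def L'_def by (simp add: divide_right_mono)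
    have "(1 + 10/29) * M' * Lg \<le> (1 + 10/29) * M' * L'"
      using mult_left_mono[OF LgL, of "(1+10/29)*M'"] M'0 by simp
    moreover have "mr (n+1) \<le> M'" "mr (n+2) \<le> M'" "1 \<le> mr 1" "1 \<le> mr 2" using mrM mr1 by auto
    moreover have "(1 + 10/29) * M' * L' = 39/29 * M' * L'" by simp
    ultimately have t1: "(1 + 10/29) * M' * Lg \<le> 39/29 * M' * L'" by linarith
    have t2: "3 * (mr (n+1) + mr (n+2) - mr 1 - mr 2) \<le> 6 * M' - 3 * mr 1 - 3 * mr 2"
      using mrM[rule_format, of "n+1"] mrM[rule_format, of "n+2"] by simp
    have "mr 1 + mr 2 + (\<Sum>i<n. mr (i+3)) \<le> mr 1 + mr 2 + ((1 + 10/29) * M' * Lg + 3 * (mr (n+1) + mr (n+2) - mr 1 - mr 2))"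
      using cb by (rule add_left_mono)
    also have "\<dots> \<le> mr 1 + mr 2 + (39/29 * M' * L' + (6 * M' - 3 * mr 1 - 3 * mr 2))"
      using t1 t2 by (intro add_left_mono add_mono)
    also have "\<dots> \<le> 6 * M' + 39/29 * M' * L'" using mr1[rule_format, of 1] mr1[rule_format, of 2] by simp
    finally have "mr 1 + mr 2 + (\<Sum>i<n. mr (i+3)) \<le> 6 * M' + 39/29 * M' * L'" .
    then show ?thesis using Suc sum_shift[of mr n] by simp
  qed
  have "6 * M' + 39/29 * M' * L' \<le> 39/29 * M' * (5 + L')" using M'0 by (simp add: algebra_simps)
  also have "\<dots> \<le> 39/29 * M' * C" using C5 M'0 by (intro mult_left_mono) auto
  also have "\<dots> \<le> exp 1 * M' / 2 * C"
  proof -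
    have h: "39/29 * M' \<le> exp 1 / 2 * M'" using e M'0 by (intro mult_right_mono) auto
    have C0: "0 \<le> C" using C5 L'0 by simp
    have "39/29 * M' * C \<le> exp 1 / 2 * M' * C" using mult_right_mono[OF h C0] .
    moreover have "exp 1 / 2 * M' * C = exp 1 * M' / 2 * C" by simp
    ultimately show ?thesis by linarith
  qed
  finally have "(\<Sum>j\<le>T. mr (Suc j)) \<le> exp 1 * M' / 2 * C" using key by simp
  hence p3: "(\<Sum>j\<le>Astar_jout f A z0 \<epsilon>. real (mm (Suc j)))
        \<le> exp 1 * real_of_int \<lceil>4 * nbar a (mu \<rho>)\<rceil> / 2 *
          real_of_int \<lceil>5 + 1 / ln 15 * ln (1 + real_of_ereal (f z0 - fmin f) / \<epsilon>)\<rceil>"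
    unfolding Hr unfolding T_def M'_def C_def mr_def nb_def .
  have p2: "\<forall>j \<le> Astar_jout f A z0 \<epsilon>. (\<exists>k. Ad_stop f A (zz j) (nn j) k)
        \<and> real (mm (Suc j)) \<le> real_of_int \<lceil>4 * nbar a (mu \<rho>)\<rceil>"
    using part2 unfolding T_def M'_def nb_def .
  show ?thesis using ex p2 p3 by blast
qed

end

theorem theorem1:
  fixes f :: "real^'n \<Rightarrow> ereal" and N :: "real^'n \<Rightarrow> real"
    and A :: "real^'n \<Rightarrow> nat \<Rightarrow> real^'n" and mu :: "real \<Rightarrow> real"
    and a L :: real and g :: "real^'n \<Rightarrow> real^'n"
    and \<rho> \<epsilon> :: real and z0 :: "real^'n"
  assumes "proper_fun f" and "convex_fun f" and "closed_fun f" and "solvable f"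
    and "is_norm N"
    and "\<forall>x0. A x0 0 = x0"
    and "assumptionA N f A mu a L g"
    and "\<rho> > 0" and "z0 \<in> Vlev f \<rho>" and "\<epsilon> > 0"
  shows "(\<exists>j. Astar_stop f A z0 \<epsilon> j)
    \<and> (\<forall>j \<le> Astar_jout f A z0 \<epsilon>.
          (\<exists>k. Ad_stop f A (Astar_z f A z0 j) (Astar_n f A z0 j) k)
        \<and> real (Astar_m f A z0 (Suc j)) \<le> real_of_int \<lceil>4 * nbar a (mu \<rho>)\<rceil>)
    \<and> (\<Sum>j\<le>Astar_jout f A z0 \<epsilon>. real (Astar_m f A z0 (Suc j)))
        \<le> exp 1 * real_of_int \<lceil>4 * nbar a (mu \<rho>)\<rceil> / 2 *
          real_of_int \<lceil>5 + 1 / ln 15 * ln (1 + real_of_ereal (f z0 - fmin f) / \<epsilon>)\<rceil>"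
proof -
  have s: "S f N A mu a L g \<rho> z0" unfolding S_def using assms by blast
  show ?thesis using S.main[OF s assms(10)] .
qed

end
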